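(* Let $0<q<1$, let $n$ be a positive integer and let $s_1,\dots,s_n$ be real numbers with $s_k>1$ for all $k$. Then \[ \prod_{k=1}^n \zeta[s_k] = \sum_{m=1}^n \sum_{(P_1,\dots,P_m)} \sum_{\nu_1=0}^{|P_1|-1}\cdots\sum_{\nu_m=0}^{|P_m|-1} \zeta\Big[p_1-\nu_1,\,p_2-\nu_2,\,\dots,\,p_m-\nu_m\Big]\prod_{j=1}^m \binom{|P_j|-1}{\nu_j}(1-q)^{\nu_j}, \] where the middle sum runs over all ordered set partitions $(P_1,\dots,P_m)$ of $\{1,\dots,n\}$ into exactly $m$ blocks, and $p_j:=\sum_{i\in P_j}s_i$.
   Context: Fix $0<q<1$. For real $x$, $[x]_q := (1-q^x)/(1-q)$. For an integer $m\ge1$ and real $s_1,\dots,s_m$ with $s_1>1$ and $s_j\ge1$ for $j\ge2$, the multiple $q$-zeta function is $\zeta[s_1,\dots,s_m] := \sum_{k_1>\cdots>k_m>0}\prod_{j=1}^m q^{(s_j-1)k_j}/[k_j]_q^{s_j}$ (sum over positive integers). An ordered set partition of a finite set $S$ into $m$ blocks is an $m$-tuple $(P_1,\dots,P_m)$ of pairwise disjoint non-empty subsets of $S$ whose union is $S$. *)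

theory Defs
  imports "HOL-Analysis.Analysis"
begin

definition qnum :: "real \<Rightarrow> real \<Rightarrow> real" where
  "qnum q x = (1 - q powr x) / (1 - q)"

definition mqzeta :: "real \<Rightarrow> real list \<Rightarrow> real" where
  "mqzeta q s = infsum
     (\<lambda>ks. \<Prod>j<length s. q powr ((s!j - 1) * real (ks!j)) / (qnum q (real (ks!j))) powr (s!j))
     {ks. length ks = length s \<and> sorted_wrt (>) ks \<and> (\<forall>k\<in>set ks. 0 < k)}"

definition ordered_set_partitions :: "'a set \<Rightarrow> nat \<Rightarrow> 'a set list set" where
  "ordered_set_partitions S m = {Ps. length Ps = m \<and> (\<forall>j<m. Ps!j \<noteq> {}) \<and>
      (\<forall>i<m. \<forall>j<m. i \<noteq> j \<longrightarrow> Ps!i \<inter> Ps!j = {}) \<and> \<Union>(set Ps) = S}"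

end

theory Submission
  imports Defs
begin


definition gq :: "real \<Rightarrow> real \<Rightarrow> nat \<Rightarrow> real" where
  "gq q s k = q powr ((s - 1) * real k) / (qnum q (real k)) powr s"

lemma qnum_ge1:
  assumes "0 < q" "q < 1" "0 < k"
  shows "qnum q (real k) \<ge> 1"
proof -
  have "q powr real k \<le> q powr 1"
    using assms by (intro powr_mono') auto
  then show ?thesis using assms by (simp add: qnum_def field_simps)
qed

lemma qnum_pos:
  assumes "0 < q" "q < 1" "0 < k"
  shows "qnum q (real k) > 0"
  using qnum_ge1[OF assms] by simp

lemma gq_nonneg:
  assumes "0 < q" "q < 1"
  shows "gq q s k \<ge> 0"
proof (cases "k = 0")
  case True then show ?thesis by (simp add: gq_def qnum_def)
next
  case False then show ?thesis using qnum_pos[OF assms] by (simp add: gq_def)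
qed

lemma gq_exp:
  assumes "0 < q" "q < 1" "0 < k"
  shows "gq q s k = exp ((s - 1) * (real k * ln q) - s * ln (qnum q (real k)))"
  using qnum_pos[OF assms] assms
  by (simp add: gq_def powr_def exp_diff)

lemma gq_summable:
  assumes "0 < q" "q < 1" "1 < s"
  shows "gq q s summable_on {0<..}"
proof -
  define r where "r = q powr (s - 1)"
  have "(s - 1) * ln q < 0" using assms by (intro mult_pos_neg) (auto intro: ln_less_zero)
  then have r: "0 < r" "r < 1" unfolding r_def using assms
    by (auto simp: powr_def)
  have "(\<lambda>k. r ^ k) summable_on UNIV"
    using r by (subst summable_on_UNIV_nonneg_real_iff) (auto intro: summable_geometric)
  then have "(\<lambda>k. r ^ k) summable_on {0<..}"
    by (rule summable_on_subset_banach) auto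
  then show ?thesis
  proof (rule summable_on_comparison_test)
    fix k :: nat assume k: "k \<in> {0<..}"
    have "gq q s k \<le> q powr ((s - 1) * real k) / 1"
      unfolding gq_def using qnum_ge1[OF assms(1,2), of k] k assms
      by (intro divide_left_mono) (auto intro: ge_one_powr_ge_zero)
    also have "\<dots> = r ^ k" unfolding r_def using assms
      by (simp add: powr_powr[symmetric] powr_realpow)
    finally show "gq q s k \<le> r ^ k" .
    show "0 \<le> gq q s k" using gq_nonneg assms by simp
  qed
qed

lemma mqzeta_single:
  "mqzeta q [s] = infsum (gq q s) {0<..}"
proof -
  have S: "{ks. length ks = length [s] \<and> sorted_wrt (>) ks \<and> (\<forall>k\<in>set ks. 0 < k)}
        = (\<lambda>k. [k]) ` {0<..}"
    by (auto simp: length_Suc_conv)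
  have "mqzeta q [s] = infsum (\<lambda>ks. gq q s (ks!0)) ((\<lambda>k. [k]) ` {0<..})"
    unfolding mqzeta_def S by (simp add: gq_def)
  also have "\<dots> = infsum (gq q s) {0<..}"
    by (subst infsum_reindex) (auto simp: inj_on_def o_def)
  finally show ?thesis .
qed

lemma block_identity:
  assumes q: "0 < q" "q < 1" and k: "0 < k" and P: "finite P" "P \<noteq> {}"
  shows "(\<Prod>i\<in>P. gq q (s i) k) =
    (\<Sum>\<nu><card P. real ((card P - 1) choose \<nu>) * (1 - q) ^ \<nu> * gq q ((\<Sum>i\<in>P. s i) - real \<nu>) k)"
proof -
  define L where "L = real k * ln q"
  define Qn where "Qn = qnum q (real k)"
  define lQ where "lQ = ln Qn"
  define p where "p = (\<Sum>i\<in>P. s i)"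
  define N where "N = card P - 1"
  define x where "x = exp L"
  define E where "E = exp ((p - 1) * L - p * lQ)"
  have cN: "card P = Suc N" using P by (simp add: N_def card_gt_0_iff)
  have Qpos: "Qn > 0" using qnum_pos[OF q k] by (simp add: Qn_def)
  have xpos: "x > 0" by (simp add: x_def)
  have Qx: "(1 - q) * Qn = 1 - x"
    using q by (simp add: Qn_def qnum_def x_def L_def powr_def)
  have "(\<Prod>i\<in>P. gq q (s i) k) = (\<Prod>i\<in>P. exp ((s i - 1) * L - s i * lQ))"
    using gq_exp[OF q k] by (simp add: L_def lQ_def Qn_def)
  also have "\<dots> = exp (\<Sum>i\<in>P. (s i - 1) * L - s i * lQ)"
    using P by (simp add: exp_sum)
  also have "(\<Sum>i\<in>P. (s i - 1) * L - s i * lQ) = (p - real (card P)) * L - p * lQ"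
    by (simp add: p_def sum_subtractf sum_distrib_right left_diff_distrib)
  finally have LHS: "(\<Prod>i\<in>P. gq q (s i) k) = exp ((p - real (card P)) * L - p * lQ)" .
  have tm: "real (N choose \<nu>) * (1 - q) ^ \<nu> * gq q (p - real \<nu>) k
      = E * (real (N choose \<nu>) * ((1 - x) / x) ^ \<nu>)" for \<nu>
  proof -
    have "gq q (p - real \<nu>) k = exp ((p - real \<nu> - 1) * L - (p - real \<nu>) * lQ)"
      using gq_exp[OF q k] by (simp add: L_def lQ_def Qn_def)
    also have "\<dots> = E * (exp (- L) * Qn) ^ \<nu>"
    proof -
      have "(p - real \<nu> - 1) * L - (p - real \<nu>) * lQ = ((p - 1) * L - p * lQ) + real \<nu> * (- L + lQ)"
        by (simp add: algebra_simps)
      moreover have "exp (real \<nu> * (- L + lQ)) = (exp (- L) * Qn) ^ \<nu>"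
        using Qpos by (simp add: exp_of_nat_mult exp_diff lQ_def exp_minus divide_inverse mult.commute)
      ultimately show ?thesis
        by (simp only: exp_add E_def)
    qed
    finally have "(1 - q) ^ \<nu> * gq q (p - real \<nu>) k = E * ((1 - q) * Qn * exp (- L)) ^ \<nu>"
      by (simp add: power_mult_distrib)
    also have "\<dots> = E * ((1 - x) / x) ^ \<nu>"
      by (simp add: Qx x_def exp_minus divide_inverse)
    finally show ?thesis by simp
  qed
  have "(\<Sum>\<nu><card P. real ((card P - 1) choose \<nu>) * (1 - q) ^ \<nu> * gq q ((\<Sum>i\<in>P. s i) - real \<nu>) k)
      = E * (\<Sum>\<nu>\<le>N. real (N choose \<nu>) * ((1 - x) / x) ^ \<nu>)"
    unfolding cN N_def[symmetric] p_def[symmetric] lessThan_Suc_atMost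
    by (simp add: tm sum_distrib_left)
  also have "(\<Sum>\<nu>\<le>N. real (N choose \<nu>) * ((1 - x) / x) ^ \<nu>) = ((1 - x) / x + 1) ^ N"
    by (subst binomial_ring) (simp add: mult_ac)
  also have "(1 - x) / x + 1 = exp (- L)"
    using xpos by (simp add: field_simps x_def exp_minus)
  also have "E * exp (- L) ^ N = exp ((p - real (card P)) * L - p * lQ)"
  proof -
    have "exp (- L) ^ N = exp (real N * (- L))" by (simp only: exp_of_nat_mult)
    then have "E * exp (- L) ^ N = exp ((p - 1) * L - p * lQ + real N * (- L))"
      by (simp only: E_def exp_add)
    also have "(p - 1) * L - p * lQ + real N * (- L) = (p - real (card P)) * L - p * lQ"
      by (simp add: cN algebra_simps)
    finally show ?thesis .
  qed
  finally show ?thesis using LHS by simp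
qed

lemma prod_sum_lists:
  fixes f :: "nat \<Rightarrow> nat \<Rightarrow> real"
  shows "(\<Prod>j<m. \<Sum>v<c j. f j v) =
    (\<Sum>vs\<in>{vs. length vs = m \<and> (\<forall>j<m. vs!j < c j)}. \<Prod>j<m. f j (vs!j))"
proof (induction m)
  case 0
  have "{vs. length vs = 0 \<and> (\<forall>j<0. vs!j < c j)} = {[]}" by auto
  then show ?case by simp
next
  case (Suc m)
  define S where "S m = {vs. length vs = m \<and> (\<forall>j<m. vs!j < c j)}" for m
  have img: "S (Suc m) = (\<lambda>(vs, v). vs @ [v]) ` (S m \<times> {..<c m})"
  proof (rule set_eqI, rule iffI)
    fix ws assume "ws \<in> S (Suc m)"
    then have ws: "length ws = Suc m" "\<forall>j<Suc m. ws!j < c j" by (auto simp: S_def)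
    then obtain vs v where e: "ws = vs @ [v]"
      by (metis length_Suc_conv_rev)
    have lv: "length vs = m" using ws e by simp
    have "vs!j < c j" if "j < m" for j
      using ws(2)[rule_format, of j] that lv by (simp add: e nth_append)
    moreover have "v < c m"
      using ws(2)[rule_format, of m] lv unfolding e by (metis lessI nth_append_length)
    ultimately have "(vs, v) \<in> S m \<times> {..<c m}"
      using lv by (simp add: S_def)
    then show "ws \<in> (\<lambda>(vs, v). vs @ [v]) ` (S m \<times> {..<c m})" using e by force
  next
    fix ws assume "ws \<in> (\<lambda>(vs, v). vs @ [v]) ` (S m \<times> {..<c m})"
    then obtain vs v where "(vs, v) \<in> S m \<times> {..<c m}" "ws = vs @ [v]" by auto
    then show "ws \<in> S (Suc m)"
      by (auto simp: S_def nth_append less_Suc_eq)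
  qed
  have inj: "inj_on (\<lambda>(vs, v). vs @ [v]) (S m \<times> {..<c m})"
    by (auto simp: inj_on_def)
  have fin: "finite (S m)"
  proof -
    have "S m \<subseteq> {vs. set vs \<subseteq> {..<Max (c ` {..<m}) + 1} \<and> length vs = m}"
    proof
      fix vs assume "vs \<in> S m"
      then have "length vs = m" "\<forall>j<m. vs!j < c j" by (auto simp: S_def)
      moreover have "c j \<le> Max (c ` {..<m})" if "j < m" for j
        using that by (intro Max_ge) auto
      ultimately have "\<forall>j<m. vs!j < Max (c ` {..<m}) + 1"
        by (meson less_le_trans trans_less_add1)
      then show "vs \<in> {vs. set vs \<subseteq> {..<Max (c ` {..<m}) + 1} \<and> length vs = m}"
        using \<open>length vs = m\<close> by (auto simp: in_set_conv_nth)
    qed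
    then show ?thesis by (rule finite_subset) (rule finite_lists_length_eq, simp)
  qed
  have "(\<Prod>j<Suc m. \<Sum>v<c j. f j v) = (\<Sum>vs\<in>S m. \<Prod>j<m. f j (vs!j)) * (\<Sum>v<c m. f m v)"
    using Suc by (simp add: S_def)
  also have "\<dots> = (\<Sum>(vs, v)\<in>S m \<times> {..<c m}. (\<Prod>j<m. f j (vs!j)) * f m v)"
    by (simp add: sum_product sum.cartesian_product)
  also have "\<dots> = (\<Sum>(vs, v)\<in>S m \<times> {..<c m}. \<Prod>j<Suc m. f j ((vs @ [v])!j))"
  proof (rule sum.cong)
    fix z assume "z \<in> S m \<times> {..<c m}"
    then obtain vs v where z: "z = (vs, v)" "length vs = m" by (auto simp: S_def)
    have "(\<Prod>j<m. f j ((vs @ [v])!j)) = (\<Prod>j<m. f j (vs!j))"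
      by (rule prod.cong) (auto simp: nth_append z)
    moreover have "(vs @ [v])!m = v" using z(2) by (metis nth_append_length)
    ultimately show "(case z of (vs, v) \<Rightarrow> (\<Prod>j<m. f j (vs!j)) * f m v) =
          (case z of (vs, v) \<Rightarrow> \<Prod>j<Suc m. f j ((vs @ [v])!j))"
      by (simp add: z(1))
  qed simp
  also have "\<dots> = (\<Sum>ws\<in>S (Suc m). \<Prod>j<Suc m. f j (ws!j))"
    unfolding img by (subst sum.reindex[OF inj]) (simp add: case_prod_unfold)
  finally show ?case by (simp add: S_def)
qed



definition Dec :: "nat \<Rightarrow> nat list set" where
  "Dec m = {ks. length ks = m \<and> sorted_wrt (>) ks \<and> (\<forall>k\<in>set ks. 0 < k)}"

definition idx :: "'a set list \<Rightarrow> 'a \<Rightarrow> nat" where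
  "idx Ps i = (THE j. j < length Ps \<and> i \<in> Ps!j)"

definition Psi :: "'a set \<Rightarrow> 'a set list \<times> nat list \<Rightarrow> 'a \<Rightarrow> nat" where
  "Psi A d = restrict (\<lambda>i. snd d ! idx (fst d) i) A"

definition Phi :: "'a set \<Rightarrow> ('a \<Rightarrow> nat) \<Rightarrow> 'a set list \<times> nat list" where
  "Phi A K = (map (\<lambda>v. {i\<in>A. K i = v}) (rev (sorted_list_of_set (K ` A))),
              rev (sorted_list_of_set (K ` A)))"

lemma osp_len: "Ps \<in> ordered_set_partitions A m \<Longrightarrow> length Ps = m"
  by (simp add: ordered_set_partitions_def)

lemma osp_sub: "Ps \<in> ordered_set_partitions A m \<Longrightarrow> j < m \<Longrightarrow> Ps!j \<subseteq> A"
  unfolding ordered_set_partitions_def by (auto simp: set_conv_nth)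

lemma osp_ne: "Ps \<in> ordered_set_partitions A m \<Longrightarrow> j < m \<Longrightarrow> Ps!j \<noteq> {}"
  unfolding ordered_set_partitions_def by auto

lemma osp_disj: "Ps \<in> ordered_set_partitions A m \<Longrightarrow> i < m \<Longrightarrow> j < m \<Longrightarrow> i \<noteq> j \<Longrightarrow> Ps!i \<inter> Ps!j = {}"
  unfolding ordered_set_partitions_def by auto

lemma osp_union: "Ps \<in> ordered_set_partitions A m \<Longrightarrow> A = (\<Union>j<m. Ps!j)"
  unfolding ordered_set_partitions_def by (auto simp: set_conv_nth)

lemma idx_eq:
  assumes "Ps \<in> ordered_set_partitions A m" "j < m" "i \<in> Ps!j"
  shows "idx Ps i = j"
  unfolding idx_def
proof (rule the_equality)
  show "j < length Ps \<and> i \<in> Ps!j" using assms osp_len by auto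
next
  fix j' assume "j' < length Ps \<and> i \<in> Ps!j'"
  then show "j' = j" using osp_disj[OF assms(1), of j' j] assms osp_len[OF assms(1)] by auto
qed

lemma idx_ex:
  assumes "Ps \<in> ordered_set_partitions A m" "i \<in> A"
  shows "idx Ps i < m \<and> i \<in> Ps ! idx Ps i"
proof -
  obtain j where "j < m" "i \<in> Ps!j" using osp_union[OF assms(1)] assms(2) by auto
  then show ?thesis using idx_eq[OF assms(1)] by auto
qed

lemma sorted_gt_distinct: "sorted_wrt (>) (ks::nat list) \<Longrightarrow> distinct ks"
  by (induction ks) auto

lemma rev_sorted_list_Dec:
  assumes "sorted_wrt (>) (ks::nat list)"
  shows "rev (sorted_list_of_set (set ks)) = ks"
proof -
  have d: "distinct (rev ks)" using sorted_gt_distinct[OF assms] by simp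
  have "sorted_wrt (<) (rev ks)" using assms by (simp add: sorted_wrt_rev)
  then have s: "sorted (rev ks)" by (simp add: strict_sorted_iff)
  have "sorted_list_of_set (set (rev ks)) = rev ks"
    using d s by (metis distinct_remdups_id sorted_list_of_set_sort_remdups sorted_sort_id)
  then show ?thesis by simp
qed

lemma Phi_props:
  assumes A: "finite A" "A \<noteq> {}" and K: "K \<in> PiE A (\<lambda>_. {0<..})"
  defines "ks \<equiv> rev (sorted_list_of_set (K ` A))"
  shows "set ks = K ` A" "distinct ks" "ks \<in> Dec (length ks)"
    "1 \<le> length ks" "length ks \<le> card A"
    "fst (Phi A K) \<in> ordered_set_partitions A (length ks)" "snd (Phi A K) = ks"
proof -
  show sk: "set ks = K ` A" using A by (simp add: ks_def)
  show dk: "distinct ks" using A by (simp add: ks_def)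
  have "sorted_wrt (<) (sorted_list_of_set (K ` A))" by (rule strict_sorted_list_of_set)
  then have "sorted_wrt (>) ks" by (simp add: ks_def sorted_wrt_rev)
  moreover have "\<forall>k\<in>set ks. 0 < k" using K sk by (auto simp: PiE_def Pi_def)
  ultimately show "ks \<in> Dec (length ks)" by (simp add: Dec_def)
  have lk: "length ks = card (K ` A)" using dk sk by (metis distinct_card)
  then show "1 \<le> length ks" using A by (simp add: Suc_le_eq card_gt_0_iff)
  show "length ks \<le> card A" using lk A by (simp add: card_image_le)
  show "snd (Phi A K) = ks" by (simp add: Phi_def ks_def)
  have P: "fst (Phi A K) = map (\<lambda>v. {i\<in>A. K i = v}) ks" by (simp add: Phi_def ks_def)
  show "fst (Phi A K) \<in> ordered_set_partitions A (length ks)"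
    unfolding ordered_set_partitions_def P
  proof (intro CollectI conjI allI impI)
    show "length (map (\<lambda>v. {i \<in> A. K i = v}) ks) = length ks" by simp
  next
    fix j assume j: "j < length ks"
    then have "ks!j \<in> K ` A" using sk nth_mem by blast
    then show "map (\<lambda>v. {i \<in> A. K i = v}) ks ! j \<noteq> {}" using j by auto
  next
    fix i j assume "i < length ks" "j < length ks" "i \<noteq> j"
    then have "ks!i \<noteq> ks!j" using dk by (simp add: nth_eq_iff_index_eq)
    then show "map (\<lambda>v. {i \<in> A. K i = v}) ks ! i \<inter> map (\<lambda>v. {i \<in> A. K i = v}) ks ! j = {}"
      using \<open>i < length ks\<close> \<open>j < length ks\<close> by auto
  next
    show "\<Union> (set (map (\<lambda>v. {i \<in> A. K i = v}) ks)) = A" using sk by auto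
  qed
qed


lemma Phi_in:
  assumes A: "finite A" "A \<noteq> {}" and K: "K \<in> PiE A (\<lambda>_. {0<..})"
  shows "Phi A K \<in> Sigma (\<Union>m\<in>{1..card A}. ordered_set_partitions A m) (\<lambda>Ps. Dec (length Ps))"
proof -
  note P = Phi_props[OF A K]
  have "length (fst (Phi A K)) = length (snd (Phi A K))" by (simp add: Phi_def)
  then show ?thesis using P
    by (cases "Phi A K") auto
qed

lemma Psi_Phi:
  assumes A: "finite A" "A \<noteq> {}" and K: "K \<in> PiE A (\<lambda>_. {0<..})"
  shows "Psi A (Phi A K) = K"
proof
  fix i
  define ks where "ks = rev (sorted_list_of_set (K ` A))"
  note P = Phi_props[OF A K, folded ks_def]
  define Ps where "Ps = fst (Phi A K)"
  have Pks: "Ps = map (\<lambda>v. {i\<in>A. K i = v}) ks" by (simp add: Ps_def Phi_def ks_def)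
  show "Psi A (Phi A K) i = K i"
  proof (cases "i \<in> A")
    case True
    then have "K i \<in> set ks" using P by auto
    then obtain j where j: "j < length ks" "ks!j = K i" by (auto simp: in_set_conv_nth)
    then have "i \<in> Ps!j" using True by (simp add: Pks)
    then have "idx Ps i = j" using idx_eq[OF P(6)[folded Ps_def] j(1)] by simp
    then show ?thesis using True j P(7) by (simp add: Psi_def Ps_def)
  next
    case False
    then show ?thesis using K by (simp add: Psi_def PiE_def extensional_def)
  qed
qed

lemma Psi_in:
  assumes "Ps \<in> ordered_set_partitions A m" "ks \<in> Dec m"
  shows "Psi A (Ps, ks) \<in> PiE A (\<lambda>_. {0<..})"
proof -
  have "ks ! idx Ps i > 0" if "i \<in> A" for i
    using idx_ex[OF assms(1) that] assms(2) by (auto simp: Dec_def)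
  then show ?thesis by (auto simp: Psi_def)
qed

lemma Phi_Psi:
  assumes Ps: "Ps \<in> ordered_set_partitions A m" and ks: "ks \<in> Dec m"
  shows "Phi A (Psi A (Ps, ks)) = (Ps, ks)"
proof -
  define K where "K = Psi A (Ps, ks)"
  have lP: "length Ps = m" and lk: "length ks = m" using osp_len[OF Ps] ks by (auto simp: Dec_def)
  have dk: "distinct ks" using ks sorted_gt_distinct by (auto simp: Dec_def)
  have Ki: "K i = ks ! idx Ps i" if "i \<in> A" for i using that by (simp add: K_def Psi_def)
  have img: "K ` A = set ks"
  proof
    show "K ` A \<subseteq> set ks" using idx_ex[OF Ps] Ki lk by auto
    show "set ks \<subseteq> K ` A"
    proof
      fix v assume "v \<in> set ks"
      then obtain j where j: "j < m" "ks!j = v" using lk by (auto simp: in_set_conv_nth)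
      obtain i where i: "i \<in> Ps!j" using osp_ne[OF Ps j(1)] by auto
      have "i \<in> A" using osp_sub[OF Ps j(1)] i by auto
      moreover have "K i = v" using Ki[OF \<open>i \<in> A\<close>] idx_eq[OF Ps j(1) i] j by simp
      ultimately show "v \<in> K ` A" by auto
    qed
  qed
  have rk: "rev (sorted_list_of_set (K ` A)) = ks"
    using img rev_sorted_list_Dec ks by (auto simp: Dec_def)
  have "map (\<lambda>v. {i\<in>A. K i = v}) ks = Ps"
  proof (rule nth_equalityI)
    show "length (map (\<lambda>v. {i\<in>A. K i = v}) ks) = length Ps" using lk lP by simp
  next
    fix j assume "j < length (map (\<lambda>v. {i\<in>A. K i = v}) ks)"
    then have j: "j < m" using lk by simp
    show "map (\<lambda>v. {i\<in>A. K i = v}) ks ! j = Ps ! j"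
    proof (rule set_eqI)
      fix i
      show "i \<in> map (\<lambda>v. {i\<in>A. K i = v}) ks ! j \<longleftrightarrow> i \<in> Ps ! j"
      proof
        assume "i \<in> map (\<lambda>v. {i\<in>A. K i = v}) ks ! j"
        then have iA: "i \<in> A" and e: "ks ! idx Ps i = ks ! j" using j lk Ki by auto
        have "idx Ps i < m" "i \<in> Ps ! idx Ps i" using idx_ex[OF Ps iA] by auto
        moreover have "idx Ps i = j" using e dk \<open>idx Ps i < m\<close> j lk by (simp add: nth_eq_iff_index_eq)
        ultimately show "i \<in> Ps ! j" by simp
      next
        assume i: "i \<in> Ps ! j"
        then have iA: "i \<in> A" using osp_sub[OF Ps j] by auto
        then show "i \<in> map (\<lambda>v. {i\<in>A. K i = v}) ks ! j"
          using Ki[OF iA] idx_eq[OF Ps j i] j lk by simp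
      qed
    qed
  qed
  then show ?thesis using rk by (simp add: Phi_def K_def)
qed

lemma Psi_prod:
  fixes h :: "'a \<Rightarrow> nat \<Rightarrow> real"
  assumes Ps: "Ps \<in> ordered_set_partitions A m" and A: "finite A"
  shows "(\<Prod>i\<in>A. h i (Psi A (Ps, ks) i)) = (\<Prod>j<m. \<Prod>i\<in>Ps!j. h i (ks!j))"
proof -
  have "(\<Prod>i\<in>A. h i (Psi A (Ps, ks) i)) = (\<Prod>i\<in>(\<Union>j<m. Ps!j). h i (Psi A (Ps, ks) i))"
    using osp_union[OF Ps] by simp
  also have "\<dots> = (\<Prod>j<m. \<Prod>i\<in>Ps!j. h i (Psi A (Ps, ks) i))"
    by (rule prod.UNION_disjoint) (use osp_sub[OF Ps] A osp_disj[OF Ps] in \<open>auto intro: finite_subset\<close>)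
  also have "\<dots> = (\<Prod>j<m. \<Prod>i\<in>Ps!j. h i (ks!j))"
  proof (intro prod.cong refl)
    fix j i assume "j \<in> {..<m}" "i \<in> Ps!j"
    then show "h i (Psi A (Ps, ks) i) = h i (ks!j)"
      using idx_eq[OF Ps, of j i] osp_sub[OF Ps, of j] by (auto simp: Psi_def)
  qed
  finally show ?thesis .
qed



lemma has_sum_finsum:
  fixes f :: "'i \<Rightarrow> 'a \<Rightarrow> real"
  assumes "finite I" "\<And>i. i \<in> I \<Longrightarrow> (f i has_sum S i) A"
  shows "((\<lambda>x. \<Sum>i\<in>I. f i x) has_sum (\<Sum>i\<in>I. S i)) A"
  using assms
proof (induction I rule: finite_induct)
  case empty then show ?case by simp
next
  case (insert a I)
  have "((\<lambda>x. f a x + (\<Sum>i\<in>I. f i x)) has_sum (S a + (\<Sum>i\<in>I. S i))) A"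
    by (rule has_sum_add) (use insert in auto)
  then show ?case using insert by simp
qed

lemma infsum_finsum:
  fixes f :: "'i \<Rightarrow> 'a \<Rightarrow> real"
  assumes "finite I" "\<And>i. i \<in> I \<Longrightarrow> f i summable_on A"
  shows "infsum (\<lambda>x. \<Sum>i\<in>I. f i x) A = (\<Sum>i\<in>I. infsum (f i) A)"
  using has_sum_finsum[OF assms(1), where f=f and S="\<lambda>i. infsum (f i) A" and A=A] assms(2)
  by (simp add: has_sum_iff)

lemma fin_lists:
  "finite {vs. length vs = m \<and> (\<forall>j<m. vs!j < (c j :: nat))}"
proof -
  have "{vs. length vs = m \<and> (\<forall>j<m. vs!j < c j)} \<subseteq> {vs. set vs \<subseteq> {..<Max (c ` {..<m}) + 1} \<and> length vs = m}"
  proof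
    fix vs assume "vs \<in> {vs. length vs = m \<and> (\<forall>j<m. vs!j < c j)}"
    then have "length vs = m" "\<forall>j<m. vs!j < c j" by auto
    moreover have "c j \<le> Max (c ` {..<m})" if "j < m" for j
      using that by (intro Max_ge) auto
    ultimately have "\<forall>j<m. vs!j < Max (c ` {..<m}) + 1"
      by (meson less_le_trans trans_less_add1)
    then show "vs \<in> {vs. set vs \<subseteq> {..<Max (c ` {..<m}) + 1} \<and> length vs = m}"
      using \<open>length vs = m\<close> by (auto simp: in_set_conv_nth)
  qed
  then show ?thesis by (rule finite_subset) (rule finite_lists_length_eq, simp)
qed

lemma inner:
  assumes q: "0 < q" "q < 1" and Ps: "Ps \<in> ordered_set_partitions A m" and A: "finite A"
    and sH: "(\<lambda>ks. \<Prod>j<m. \<Prod>i\<in>Ps!j. gq q (s i) (ks!j)) summable_on Dec m"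
  shows "infsum (\<lambda>ks. \<Prod>j<m. \<Prod>i\<in>Ps!j. gq q (s i) (ks!j)) (Dec m) =
    (\<Sum>\<nu>s\<in>{\<nu>s. length \<nu>s = m \<and> (\<forall>j<m. \<nu>s!j < card (Ps!j))}.
         mqzeta q (map (\<lambda>j. (\<Sum>i\<in>Ps!j. s i) - real (\<nu>s!j)) [0..<m]) *
         (\<Prod>j<m. real ((card (Ps!j) - 1) choose (\<nu>s!j)) * (1 - q) ^ (\<nu>s!j)))"
proof -
  define H' where "H' = (\<lambda>ks. \<Prod>j<m. \<Prod>i\<in>Ps!j. gq q (s i) (ks!j))"
  define N where "N = {\<nu>s. length \<nu>s = m \<and> (\<forall>j<m. \<nu>s!j < card (Ps!j))}"
  define Z where "Z \<nu>s ks = (\<Prod>j<m. gq q ((\<Sum>i\<in>Ps!j. s i) - real (\<nu>s!j)) (ks!j))" for \<nu>s ks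
  define C where "C \<nu>s = (\<Prod>j<m. real ((card (Ps!j) - 1) choose (\<nu>s!j)) * (1 - q) ^ (\<nu>s!j))" for \<nu>s
  have finN: "finite N" unfolding N_def by (rule fin_lists)
  have pt: "H' ks = (\<Sum>\<nu>s\<in>N. Z \<nu>s ks * C \<nu>s)" if ks: "ks \<in> Dec m" for ks
  proof -
    have kpos: "0 < ks!j" if "j < m" for j
      using ks that by (auto simp: Dec_def)
    have "H' ks = (\<Prod>j<m. \<Sum>\<nu><card (Ps!j). real ((card (Ps!j) - 1) choose \<nu>) * (1 - q) ^ \<nu> *
                      gq q ((\<Sum>i\<in>Ps!j. s i) - real \<nu>) (ks!j))"
      unfolding H'_def
    proof (rule prod.cong[OF refl])
      fix j assume "j \<in> {..<m}"
      then have j: "j < m" by simp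
      show "(\<Prod>i\<in>Ps!j. gq q (s i) (ks!j)) = (\<Sum>\<nu><card (Ps!j). real ((card (Ps!j) - 1) choose \<nu>) * (1 - q) ^ \<nu> *
                      gq q ((\<Sum>i\<in>Ps!j. s i) - real \<nu>) (ks!j))"
        by (rule block_identity[OF q kpos[OF j]])
           (use osp_sub[OF Ps j] osp_ne[OF Ps j] A in \<open>auto intro: finite_subset\<close>)
    qed
    also have "\<dots> = (\<Sum>\<nu>s\<in>N. \<Prod>j<m. real ((card (Ps!j) - 1) choose (\<nu>s!j)) * (1 - q) ^ (\<nu>s!j) *
                      gq q ((\<Sum>i\<in>Ps!j. s i) - real (\<nu>s!j)) (ks!j))"
      unfolding N_def by (rule prod_sum_lists)
    also have "\<dots> = (\<Sum>\<nu>s\<in>N. Z \<nu>s ks * C \<nu>s)"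
      by (simp add: Z_def C_def prod.distrib[symmetric] mult_ac)
    finally show ?thesis .
  qed
  have Znn: "0 \<le> Z \<nu>s ks" for \<nu>s ks
    unfolding Z_def using gq_nonneg[OF q] by (simp add: prod_nonneg)
  have Cnn: "0 \<le> C \<nu>s" for \<nu>s
    unfolding C_def using q by (simp add: prod_nonneg)
  have sZC: "(\<lambda>ks. Z \<nu>s ks * C \<nu>s) summable_on Dec m" if "\<nu>s \<in> N" for \<nu>s
  proof (rule summable_on_comparison_test)
    show "H' summable_on Dec m" using sH by (simp add: H'_def)
  next
    fix ks assume "ks \<in> Dec m"
    show "0 \<le> Z \<nu>s ks * C \<nu>s" using Znn Cnn by simp
    have "Z \<nu>s ks * C \<nu>s \<le> (\<Sum>\<nu>s\<in>N. Z \<nu>s ks * C \<nu>s)"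
      by (rule member_le_sum) (use that finN Znn Cnn in auto)
    then show "Z \<nu>s ks * C \<nu>s \<le> H' ks" using pt[OF \<open>ks \<in> Dec m\<close>] by simp
  qed
  have mq: "mqzeta q (map (\<lambda>j. (\<Sum>i\<in>Ps!j. s i) - real (\<nu>s!j)) [0..<m]) = infsum (Z \<nu>s) (Dec m)" for \<nu>s
  proof -
    have set: "{ks. length ks = length (map (\<lambda>j. (\<Sum>i\<in>Ps!j. s i) - real (\<nu>s!j)) [0..<m]) \<and>
        sorted_wrt (>) ks \<and> (\<forall>k\<in>set ks. 0 < k)} = Dec m" by (simp add: Dec_def)
    show ?thesis unfolding mqzeta_def set
      by (rule infsum_cong) (simp add: Z_def gq_def)
  qed
  have "infsum H' (Dec m) = infsum (\<lambda>ks. \<Sum>\<nu>s\<in>N. Z \<nu>s ks * C \<nu>s) (Dec m)"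
    by (rule infsum_cong) (simp add: pt)
  also have "\<dots> = (\<Sum>\<nu>s\<in>N. infsum (\<lambda>ks. Z \<nu>s ks * C \<nu>s) (Dec m))"
    by (rule infsum_finsum[OF finN]) (rule sZC)
  also have "\<dots> = (\<Sum>\<nu>s\<in>N. infsum (Z \<nu>s) (Dec m) * C \<nu>s)"
  proof (rule sum.cong[OF refl])
    fix \<nu>s assume v: "\<nu>s \<in> N"
    show "infsum (\<lambda>ks. Z \<nu>s ks * C \<nu>s) (Dec m) = infsum (Z \<nu>s) (Dec m) * C \<nu>s"
    proof (rule infsum_cmult_left)
      assume "C \<nu>s \<noteq> 0"
      then show "Z \<nu>s summable_on Dec m"
        using sZC[OF v] summable_on_cmult_left'[of "C \<nu>s" "Z \<nu>s" "Dec m"] by simp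
    qed
  qed
  finally show ?thesis unfolding H'_def N_def C_def by (simp add: mq)
qed



lemma finite_osp:
  assumes "finite A"
  shows "finite (ordered_set_partitions A m)"
proof -
  have "ordered_set_partitions A m \<subseteq> {Ps. set Ps \<subseteq> Pow A \<and> length Ps = m}"
    unfolding ordered_set_partitions_def by auto
  then show ?thesis
    by (rule finite_subset) (rule finite_lists_length_eq, simp add: assms)
qed

theorem theorem2p2:
  fixes q :: real and n :: nat and s :: "nat \<Rightarrow> real"
  assumes "0 < q" and "q < 1" and "1 \<le> n" and "\<forall>k\<in>{1..n}. s k > 1"
  shows "(\<Prod>k=1..n. mqzeta q [s k]) =
    (\<Sum>m=1..n. \<Sum>Ps\<in>ordered_set_partitions {1..n} m.
       \<Sum>\<nu>s\<in>{\<nu>s. length \<nu>s = m \<and> (\<forall>j<m. \<nu>s!j < card (Ps!j))}.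
         mqzeta q (map (\<lambda>j. (\<Sum>i\<in>Ps!j. s i) - real (\<nu>s!j)) [0..<m]) *
         (\<Prod>j<m. real ((card (Ps!j) - 1) choose (\<nu>s!j)) * (1 - q) ^ (\<nu>s!j)))"
proof -
  note q = assms(1,2)
  define A where "A = {1..n}"
  have A: "finite A" "A \<noteq> {}" "card A = n" using assms(3) by (auto simp: A_def)
  define Kset where "Kset = PiE A (\<lambda>_. {0::nat<..})"
  define F where "F = (\<lambda>K. \<Prod>i\<in>A. gq q (s i) (K i))"
  have absg: "(\<lambda>k. norm (gq q (s i) k)) summable_on {0<..}" if "i \<in> A" for i
  proof -
    have "gq q (s i) summable_on {0<..}"
      by (rule gq_summable[OF q]) (use assms(4) that in \<open>auto simp: A_def\<close>)
    then show ?thesis using gq_nonneg[OF q] by simp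
  qed
  have "(\<Prod>k=1..n. mqzeta q [s k]) = (\<Prod>i\<in>A. infsum (gq q (s i)) {0<..})"
    by (simp add: A_def mqzeta_single)
  also have "\<dots> = infsum F Kset"
    using infsum_prod_PiE_abs[OF A(1), where f="\<lambda>i. gq q (s i)" and B="\<lambda>_. {0<..}"] absg
    by (simp add: F_def Kset_def)
  finally have L1: "(\<Prod>k=1..n. mqzeta q [s k]) = infsum F Kset" .
  have sumF: "F summable_on Kset"
  proof -
    have "Infinite_Set_Sum.abs_summable_on (\<lambda>g. \<Prod>x\<in>A. gq q (s x) (g x)) (PiE A (\<lambda>_. {0<..}))"
      by (rule abs_summable_on_prod_PiE[OF A(1)]) (auto intro: abs_summable_equivalent[THEN iffD1, OF absg])
    then have "(\<lambda>K. norm (F K)) summable_on Kset"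
      unfolding F_def Kset_def by (rule abs_summable_equivalent[THEN iffD2])
    then show ?thesis by (rule abs_summable_summable)
  qed
  define Pset where "Pset = (\<Union>m\<in>{1..n}. ordered_set_partitions A m)"
  define D where "D = Sigma Pset (\<lambda>Ps. Dec (length Ps))"
  define H where "H = (\<lambda>(Ps, ks). \<Prod>j<length Ps. \<Prod>i\<in>Ps!j. gq q (s i) (ks!j))"
  have DE: "P Ps ks" if "(Ps, ks) \<in> D"
    "\<And>m. Ps \<in> ordered_set_partitions A m \<Longrightarrow> ks \<in> Dec m \<Longrightarrow> length Ps = m \<Longrightarrow> P Ps ks" for P Ps ks
    using that osp_len by (auto simp: D_def Pset_def)
  have w1: "Phi A (Psi A d) = d" if "d \<in> D" for d
    using that by (cases d) (auto elim!: DE intro: Phi_Psi)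
  have w2: "Psi A d \<in> Kset" if "d \<in> D" for d
  proof -
    obtain Ps ks where d: "d = (Ps, ks)" by (cases d)
    then have "(Ps, ks) \<in> D" using that by simp
    then show ?thesis by (rule DE) (metis d Kset_def Psi_in)
  qed
  have w3: "Psi A (Phi A K) = K" if "K \<in> Kset" for K
    using Psi_Phi[OF A(1,2)] that by (simp add: Kset_def)
  have w4: "Phi A K \<in> D" if "K \<in> Kset" for K
    using Phi_in[OF A(1,2)] that A(3) by (simp add: Kset_def D_def Pset_def)
  have w5: "F (Psi A d) = H d" if "d \<in> D" for d
  proof -
    obtain Ps ks where d: "d = (Ps, ks)" by (cases d)
    then have "(Ps, ks) \<in> D" using that by simp
    then show ?thesis
    proof (rule DE)
      fix m assume "Ps \<in> ordered_set_partitions A m" "length Ps = m"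
      then show "F (Psi A d) = H d"
        using Psi_prod[where h="\<lambda>i. gq q (s i)", OF _ A(1), of Ps m ks] by (simp add: d F_def H_def)
    qed
  qed
  have L2: "infsum H D = infsum F Kset"
    by (rule infsum_reindex_bij_witness[of D "Phi A" "Psi A" Kset F H]) (use w1 w2 w3 w4 w5 in auto)
  have sumH: "H summable_on D"
    using summable_on_reindex_bij_witness[of D "Phi A" "Psi A" Kset F H] w1 w2 w3 w4 w5 sumF by auto
  have finP: "finite Pset" unfolding Pset_def using finite_osp[OF A(1)] by auto
  have sumHP: "(\<lambda>ks. H (Ps, ks)) summable_on Dec (length Ps)" if "Ps \<in> Pset" for Ps
  proof -
    have "H summable_on Pair Ps ` Dec (length Ps)"
      by (rule summable_on_subset_banach[OF sumH]) (use that in \<open>auto simp: D_def\<close>)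
    then have "(H \<circ> Pair Ps) summable_on Dec (length Ps)"
      by (subst (asm) summable_on_reindex) (auto simp: inj_on_def)
    then show ?thesis by (simp add: o_def)
  qed
  have "infsum H D = infsum (\<lambda>Ps. infsum (\<lambda>ks. H (Ps, ks)) (Dec (length Ps))) Pset"
  proof -
    have "(\<lambda>(x, y). H (x, y)) summable_on Sigma Pset (\<lambda>Ps. Dec (length Ps))"
      using sumH by (simp add: D_def)
    then show ?thesis using infsum_Sigma'_banach[where f="\<lambda>x y. H (x, y)" and A=Pset and B="\<lambda>Ps. Dec (length Ps)"]
      by (simp add: D_def)
  qed
  also have "\<dots> = (\<Sum>Ps\<in>Pset. infsum (\<lambda>ks. H (Ps, ks)) (Dec (length Ps)))"
    using finP by simp
  also have "\<dots> = (\<Sum>m\<in>{1..n}. \<Sum>Ps\<in>ordered_set_partitions A m. infsum (\<lambda>ks. H (Ps, ks)) (Dec (length Ps)))"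
    unfolding Pset_def
  proof (rule sum.UNION_disjoint)
    show "finite {1..n}" by simp
    show "\<forall>m\<in>{1..n}. finite (ordered_set_partitions A m)" using finite_osp[OF A(1)] by simp
    show "\<forall>i\<in>{1..n}. \<forall>j\<in>{1..n}. i \<noteq> j \<longrightarrow> ordered_set_partitions A i \<inter> ordered_set_partitions A j = {}"
      using osp_len by blast
  qed
  also have "\<dots> = (\<Sum>m=1..n. \<Sum>Ps\<in>ordered_set_partitions {1..n} m.
       \<Sum>\<nu>s\<in>{\<nu>s. length \<nu>s = m \<and> (\<forall>j<m. \<nu>s!j < card (Ps!j))}.
         mqzeta q (map (\<lambda>j. (\<Sum>i\<in>Ps!j. s i) - real (\<nu>s!j)) [0..<m]) *
         (\<Prod>j<m. real ((card (Ps!j) - 1) choose (\<nu>s!j)) * (1 - q) ^ (\<nu>s!j)))"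
  proof (intro sum.cong refl)
    fix m Ps assume m: "m \<in> {1..n}" and Ps: "Ps \<in> ordered_set_partitions {1..n} m"
    have Ps': "Ps \<in> ordered_set_partitions A m" using Ps by (simp add: A_def)
    have lP: "length Ps = m" using osp_len[OF Ps'] .
    have PsP: "Ps \<in> Pset" using m Ps' by (auto simp: Pset_def)
    have sH: "(\<lambda>ks. \<Prod>j<m. \<Prod>i\<in>Ps!j. gq q (s i) (ks!j)) summable_on Dec m"
      using sumHP[OF PsP] by (simp add: H_def lP)
    show "infsum (\<lambda>ks. H (Ps, ks)) (Dec (length Ps)) =
       (\<Sum>\<nu>s\<in>{\<nu>s. length \<nu>s = m \<and> (\<forall>j<m. \<nu>s!j < card (Ps!j))}.
         mqzeta q (map (\<lambda>j. (\<Sum>i\<in>Ps!j. s i) - real (\<nu>s!j)) [0..<m]) *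
         (\<Prod>j<m. real ((card (Ps!j) - 1) choose (\<nu>s!j)) * (1 - q) ^ (\<nu>s!j)))"
      using inner[OF q Ps' A(1) sH] by (simp add: H_def lP)
  qed (simp add: A_def)
  finally show ?thesis using L1 L2 by simp
qed

end
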